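(* Let $|p|<1$, $|P|<1$, let $n\ge0$ be an integer, and let $a,b,c,q,r,s,t$ and $A,B,C,Q,R,S,T$ be nonzero complex numbers such that all expressions below are well defined. For a tuple $\pi=(a,b,c;q,r,s,t;p)$ define, for integers $k\ge 0$, \begin{align*} \mu_k(\pi)&=\frac{\theta\big(a(rst/q)^k,\,br^kq^{-k},\,cs^kq^{-k},\,at^k/(bcq^k);p\big)}{\theta(a,b,c,a/(bc);p)}\cdot\frac{(a;rst/q^2,p)_k(b;r,p)_k(c;s,p)_k(a/(bc);t,p)_k}{(q;q,p)_k(ast/(bq);st/q,p)_k(art/(cq);rt/q,p)_k(bcrs/q;rs/q,p)_k},\\ \Psi_n(\pi)&=\frac{(arst/q^2;rst/q^2,p)_n(br;r,p)_n(cs;s,p)_n(at/(bc);t,p)_n}{(q;q,p)_n(ast/(bq);st/q,p)_n(art/(cq);rt/q,p)_n(bcrs/q;rs/q,p)_n},\\ \rho_{n,k}(\pi)&=\frac{(q^{-n};q,p)_k\,(b(q/st)^n/a;st/q,p)_k\,(c(q/rt)^n/a;rt/q,p)_k\,((q/rs)^n/(bc);rs/q,p)_k}{((q^2/rst)^n/a;rst/q^2,p)_k\,(r^{-n}/b;r,p)_k\,(s^{-n}/c;s,p)_k\,(bc/(at^n);t,p)_k}. \end{align*} With $\pi=(a,b,c;q,r,s,t;p)$ and $\Pi=(A,B,C;Q,R,S,T;P)$, $$\sum_{k=0}^n\mu_k(\pi)\,\rho_{n,k}(\Pi)\,q^k=\frac{\Psi_n(\pi)}{\Psi_n(\Pi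)}\sum_{k=0}^n\mu_k(\Pi)\,\rho_{n,k}(\pi)\,Q^k.$$
   Context: For $|p|<1$ and $x\neq 0$, $\theta(x;p)=(x;p)_\infty(p/x;p)_\infty$ where $(x;p)_\infty=\prod_{k\ge 0}(1-xp^k)$, and $\theta(x_1,\dots,x_m;p)=\prod_{i=1}^m\theta(x_i;p)$. For $a\ne0$ and integer $k\ge0$, $(a;q,p)_k=\prod_{j=0}^{k-1}\theta(aq^j;p)$ (empty product $=1$). In $\mu_k(\Pi),\Psi_n(\Pi),\rho_{n,k}(\Pi)$ every lowercase letter is replaced by the corresponding uppercase letter (including $p\mapsto P$, $q\mapsto Q$). Notation such as $(q/st)^n$ means $(q/(st))^n$. *)

theory Defs
  imports "HOL-Analysis.Analysis"
begin

definition qpinf :: "complex \<Rightarrow> complex \<Rightarrow> complex" where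
  "qpinf x p = (\<Prod>k. 1 - x * p ^ k)"

definition theta :: "complex \<Rightarrow> complex \<Rightarrow> complex" where
  "theta x p = qpinf x p * qpinf (p / x) p"

definition ellpoch :: "complex \<Rightarrow> complex \<Rightarrow> complex \<Rightarrow> nat \<Rightarrow> complex" where
  "ellpoch a q p k = (\<Prod>j<k. theta (a * q ^ j) p)"

definition mu_num :: "complex \<Rightarrow> complex \<Rightarrow> complex \<Rightarrow> complex \<Rightarrow> complex \<Rightarrow> complex \<Rightarrow> complex \<Rightarrow> complex \<Rightarrow> nat \<Rightarrow> complex" where
  "mu_num a b c q r s t p k =
     theta (a * (r * s * t/q) ^ k) p * theta (b * r ^ k / q ^ k) p * theta (c * s ^ k / q ^ k) p
     * theta (a * t ^ k / (b * c * q ^ k)) p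
     * ellpoch a (r * s * t/q^2) p k * ellpoch b r p k * ellpoch c s p k * ellpoch (a/(b * c)) t p k"

definition mu_den :: "complex \<Rightarrow> complex \<Rightarrow> complex \<Rightarrow> complex \<Rightarrow> complex \<Rightarrow> complex \<Rightarrow> complex \<Rightarrow> complex \<Rightarrow> nat \<Rightarrow> complex" where
  "mu_den a b c q r s t p k =
     theta a p * theta b p * theta c p * theta (a/(b * c)) p
     * ellpoch q q p k * ellpoch (a * s * t/(b * q)) (s * t/q) p k * ellpoch (a * r * t/(c * q)) (r * t/q) p k
     * ellpoch (b * c * r * s/q) (r * s/q) p k"

definition mu :: "complex \<Rightarrow> complex \<Rightarrow> complex \<Rightarrow> complex \<Rightarrow> complex \<Rightarrow> complex \<Rightarrow> complex \<Rightarrow> complex \<Rightarrow> nat \<Rightarrow> complex" where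
  "mu a b c q r s t p k = mu_num a b c q r s t p k / mu_den a b c q r s t p k"

definition Psi_num :: "complex \<Rightarrow> complex \<Rightarrow> complex \<Rightarrow> complex \<Rightarrow> complex \<Rightarrow> complex \<Rightarrow> complex \<Rightarrow> complex \<Rightarrow> nat \<Rightarrow> complex" where
  "Psi_num a b c q r s t p n =
     ellpoch (a * r * s * t/q^2) (r * s * t/q^2) p n * ellpoch (b * r) r p n * ellpoch (c * s) s p n
     * ellpoch (a * t/(b * c)) t p n"

definition Psi_den :: "complex \<Rightarrow> complex \<Rightarrow> complex \<Rightarrow> complex \<Rightarrow> complex \<Rightarrow> complex \<Rightarrow> complex \<Rightarrow> complex \<Rightarrow> nat \<Rightarrow> complex" where
  "Psi_den a b c q r s t p n =
     ellpoch q q p n * ellpoch (a * s * t/(b * q)) (s * t/q) p n * ellpoch (a * r * t/(c * q)) (r * t/q) p n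
     * ellpoch (b * c * r * s/q) (r * s/q) p n"

definition Psi :: "complex \<Rightarrow> complex \<Rightarrow> complex \<Rightarrow> complex \<Rightarrow> complex \<Rightarrow> complex \<Rightarrow> complex \<Rightarrow> complex \<Rightarrow> nat \<Rightarrow> complex" where
  "Psi a b c q r s t p n = Psi_num a b c q r s t p n / Psi_den a b c q r s t p n"

definition rho_num :: "complex \<Rightarrow> complex \<Rightarrow> complex \<Rightarrow> complex \<Rightarrow> complex \<Rightarrow> complex \<Rightarrow> complex \<Rightarrow> complex \<Rightarrow> nat \<Rightarrow> nat \<Rightarrow> complex" where
  "rho_num a b c q r s t p n k =
     ellpoch (1 / q ^ n) q p k * ellpoch (b * (q/(s * t)) ^ n / a) (s * t/q) p k
     * ellpoch (c * (q/(r * t)) ^ n / a) (r * t/q) p k * ellpoch ((q/(r * s)) ^ n / (b * c)) (r * s/q) p k"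

definition rho_den :: "complex \<Rightarrow> complex \<Rightarrow> complex \<Rightarrow> complex \<Rightarrow> complex \<Rightarrow> complex \<Rightarrow> complex \<Rightarrow> complex \<Rightarrow> nat \<Rightarrow> nat \<Rightarrow> complex" where
  "rho_den a b c q r s t p n k =
     ellpoch ((q^2/(r * s * t)) ^ n / a) (r * s * t/q^2) p k * ellpoch (1 / (r ^ n * b)) r p k
     * ellpoch (1 / (s ^ n * c)) s p k * ellpoch (b * c/(a * t ^ n)) t p k"

definition rho :: "complex \<Rightarrow> complex \<Rightarrow> complex \<Rightarrow> complex \<Rightarrow> complex \<Rightarrow> complex \<Rightarrow> complex \<Rightarrow> complex \<Rightarrow> nat \<Rightarrow> nat \<Rightarrow> complex" where
  "rho a b c q r s t p n k = rho_num a b c q r s t p n k / rho_den a b c q r s t p n k"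

definition well_defined :: "complex \<Rightarrow> complex \<Rightarrow> complex \<Rightarrow> complex \<Rightarrow> complex \<Rightarrow> complex \<Rightarrow> complex \<Rightarrow> complex \<Rightarrow> nat \<Rightarrow> bool" where
  "well_defined a b c q r s t p n \<longleftrightarrow>
     (\<forall>k\<le>n. mu_den a b c q r s t p k \<noteq> 0 \<and> rho_den a b c q r s t p n k \<noteq> 0)
     \<and> Psi_den a b c q r s t p n \<noteq> 0"

end

theory Submission
  imports Defs "HOL-Complex_Analysis.Complex_Analysis"
begin
lemma qp_abs: fixes x p :: complex assumes "norm p < 1" shows "abs_convergent_prod (\<lambda>k. 1 - x * p^k)"
proof (rule summable_imp_abs_convergent_prod)
  have "summable (\<lambda>k. norm x * norm p ^ k)"
    by (intro summable_mult summable_geometric) (use assms in auto)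
  then show "summable (\<lambda>k. norm (1 - x * p ^ k - 1))"
    by (simp add: norm_mult norm_power)
qed

lemma qp_conv: fixes x p :: complex assumes "norm p < 1" shows "convergent_prod (\<lambda>k. 1 - x * p^k)"
  by (rule abs_convergent_prod_imp_convergent_prod) (rule qp_abs[OF assms])

lemma qp_zero_iff: assumes "norm p < 1" shows "qpinf x p = 0 \<longleftrightarrow> (\<exists>k. x * p^k = 1)"
proof -
  have "(\<lambda>k. 1 - x * p^k) has_prod qpinf x p"
    unfolding qpinf_def using qp_conv[OF assms] by (rule convergent_prod_has_prod)
  from has_prod_eq_0_iff[OF this] have "qpinf x p = 0 \<longleftrightarrow> 0 \<in> range (\<lambda>k. 1 - x * p^k)" .
  also have "\<dots> \<longleftrightarrow> (\<exists>k. x * p^k = 1)"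
  proof
    assume "0 \<in> range (\<lambda>k. 1 - x * p^k)"
    then obtain k where "0 = 1 - x * p^k" by blast
    then show "\<exists>k. x * p^k = 1" by (intro exI[of _ k]) simp
  next
    assume "\<exists>k. x * p^k = 1"
    then obtain k where "x * p^k = 1" by blast
    then have "0 = 1 - x * p^k" by simp
    then show "0 \<in> range (\<lambda>k. 1 - x * p^k)" by blast
  qed
  finally show ?thesis .
qed

lemma qp_shift: fixes x p :: complex assumes p: "norm p < 1" shows "qpinf x p = (1 - x) * qpinf (p*x) p"
proof (cases "x = 1")
  case True
  then have "qpinf x p = 0" using qp_zero_iff[OF p, of x] by (auto intro: exI[of _ 0])
  then show ?thesis using True by simp
next
  case False
  have "(\<Prod>n. (\<lambda>k. 1 - x * p^k) (Suc n)) = prodinf (\<lambda>k. 1 - x * p^k) / (1 - x * p^0)"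
    by (rule prodinf_split_head[OF qp_conv[OF p]]) (use False in auto)
  moreover have "(\<lambda>n. (\<lambda>k. 1 - x * p^k) (Suc n)) = (\<lambda>k. 1 - (p*x) * p^k)"
    by (simp add: mult_ac)
  ultimately have "qpinf (p*x) p = qpinf x p / (1 - x)" by (simp add: qpinf_def)
  moreover have "1 - x \<noteq> 0" using False by simp
  ultimately show ?thesis by simp
qed

lemma theta_inv: fixes x p :: complex assumes "norm p < 1" "x \<noteq> 0" shows "theta (1/x) p = - theta x p / x"
proof -
  have 1: "theta (1/x) p = qpinf (1/x) p * qpinf (p*x) p" by (simp add: theta_def)
  have 2: "qpinf (1/x) p = (1 - 1/x) * qpinf (p/x) p" using qp_shift[OF assms(1), of "1/x"] by simp
  have 3: "qpinf x p = (1 - x) * qpinf (p*x) p" using qp_shift[OF assms(1), of x] by simp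
  have 4: "theta x p = (1 - x) * qpinf (p*x) p * qpinf (p/x) p" using 3 by (simp add: theta_def)
  have 5: "1 - 1/x = - (1 - x)/x" using assms(2) by (simp add: diff_divide_distrib)
  show ?thesis unfolding 1 2 4 5 by (simp add: algebra_simps)
qed

lemma theta_p: fixes x p :: complex assumes "norm p < 1" "p \<noteq> 0" "x \<noteq> 0" shows "theta (p*x) p = - theta x p / x"
proof -
  have 1: "theta (p*x) p = qpinf (p*x) p * qpinf (1/x) p" using assms by (simp add: theta_def)
  have 2: "qpinf (1/x) p = (1 - 1/x) * qpinf (p/x) p" using qp_shift[OF assms(1), of "1/x"] by simp
  have 3: "qpinf x p = (1 - x) * qpinf (p*x) p" using qp_shift[OF assms(1), of x] by simp
  have 4: "theta x p = (1 - x) * qpinf (p*x) p * qpinf (p/x) p" using 3 by (simp add: theta_def)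
  have 5: "1 - 1/x = - (1 - x)/x" using assms(3) by (simp add: diff_divide_distrib)
  show ?thesis unfolding 1 2 4 5 by (simp add: algebra_simps)
qed

lemma theta_1: fixes p :: complex assumes "norm p < 1" shows "theta 1 p = 0"
  unfolding theta_def using qp_zero_iff[OF assms, of 1] by (auto intro: exI[of _ 0])

lemma qp_holo: fixes p :: complex assumes p: "norm p < 1" shows "(\<lambda>x. qpinf x p) holomorphic_on UNIV"
proof (rule holomorphic_uniform_sequence[where f = "\<lambda>N x. \<Prod>k<N. 1 - x * p^k"])
  fix z :: complex
  define A where "A = cball z 1"
  have cA: "compact A" by (simp add: A_def)
  have uc: "uniformly_convergent_on A (\<lambda>N x. \<Prod>k<N. 1 - x * p^k)"
  proof (rule uniformly_convergent_on_prod'[OF _ cA])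
    show "uniformly_convergent_on A (\<lambda>N x. \<Sum>n<N. norm ((1 - x * p^n) - 1))"
    proof (rule Weierstrass_m_test')
      fix n x assume "x \<in> A"
      then have "norm x \<le> norm z + 1" unfolding A_def using norm_triangle_ineq2[of x z]
        by (auto simp: dist_norm norm_minus_commute)
      then show "norm (norm ((1 - x * p^n) - 1)) \<le> (norm z + 1) * norm p ^ n"
        by (simp add: norm_mult norm_power mult_right_mono)
    next
      show "summable (\<lambda>n. (norm z + 1) * norm p ^ n)"
        by (intro summable_mult summable_geometric) (use p in auto)
    qed
  qed (auto intro!: continuous_intros)
  then obtain g where g: "uniform_limit A (\<lambda>N x. \<Prod>k<N. 1 - x * p^k) g sequentially"
    by (auto simp: uniformly_convergent_on_def)
  have "uniform_limit A (\<lambda>N x. \<Prod>k<N. 1 - x * p^k) (\<lambda>x. qpinf x p) sequentially"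
  proof -
    have "g x = qpinf x p" if "x \<in> A" for x
    proof -
      from g that have "(\<lambda>n. \<Prod>k<Suc n. 1 - x * p^k) \<longlonglongrightarrow> g x"
        using tendsto_uniform_limitI[OF g that] filterlim_sequentially_Suc[of "\<lambda>n. \<Prod>k<n. 1 - x * p^k"] by simp
      moreover have "(\<lambda>n. \<Prod>k<Suc n. 1 - x * p^k) \<longlonglongrightarrow> qpinf x p"
        using convergent_prod_LIMSEQ[OF qp_conv[OF p, of x]] unfolding lessThan_Suc_atMost
        by (simp add: qpinf_def)
      ultimately show ?thesis by (rule LIMSEQ_unique)
    qed
    then have "uniform_limit A (\<lambda>N x. \<Prod>k<N. 1 - x * p^k) g sequentially \<longleftrightarrow>
       uniform_limit A (\<lambda>N x. \<Prod>k<N. 1 - x * p^k) (\<lambda>x. qpinf x p) sequentially"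
      by (intro uniform_limit_cong') auto
    with g show ?thesis by simp
  qed
  then show "\<exists>d>0. cball z d \<subseteq> UNIV \<and> uniform_limit (cball z d) (\<lambda>N x. \<Prod>k<N. 1 - x * p^k) (\<lambda>x. qpinf x p) sequentially"
    unfolding A_def by (intro exI[of _ 1]) auto
qed (auto intro!: holomorphic_intros)

lemma qp_holo_comp [holomorphic_intros]:
  fixes p :: complex assumes p: "norm p < 1" and g: "g holomorphic_on S"
  shows "(\<lambda>x. qpinf (g x) p) holomorphic_on S"
proof -
  have "((\<lambda>y. qpinf y p) \<circ> g) holomorphic_on S"
    by (rule holomorphic_on_compose[OF g holomorphic_on_subset[OF qp_holo[OF p]]]) auto
  then show ?thesis by (simp add: o_def)
qed

lemma theta_holo_comp [holomorphic_intros]: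
  fixes p :: complex assumes p: "norm p < 1" and g: "g holomorphic_on S" and nz: "\<And>x. x \<in> S \<Longrightarrow> g x \<noteq> 0"
  shows "(\<lambda>x. theta (g x) p) holomorphic_on S"
  unfolding theta_def using nz by (intro holomorphic_intros p g) auto

lemma theta_holo: fixes p :: complex assumes p: "norm p < 1" shows "(\<lambda>x. theta x p) holomorphic_on - {0}"
  using theta_holo_comp[OF p holomorphic_on_id[of "-{0}"]] by simp

lemma theta_cont_comp [continuous_intros]:
  fixes p :: complex assumes p: "norm p < 1" and g: "continuous_on S g" and nz: "\<And>x. x \<in> S \<Longrightarrow> g x \<noteq> 0"
  shows "continuous_on S (\<lambda>x. theta (g x) p)"
proof -
  have "continuous_on (-{0}) (\<lambda>x. theta x p)" using holomorphic_on_imp_continuous_on[OF theta_holo[OF p]] .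
  then have "continuous_on S ((\<lambda>x. theta x p) \<circ> g)"
    by (rule continuous_on_compose[OF g continuous_on_subset]) (use nz in auto)
  then show ?thesis by (simp add: o_def)
qed

lemma theta_pow_zero: fixes p :: complex assumes p: "norm p < 1" "p \<noteq> 0"
  shows "theta (p ^ n) p = 0"
proof (induction n)
  case 0 then show ?case using theta_1[OF p(1)] by simp
next
  case (Suc n)
  have "theta (p * p^n) p = - theta (p^n) p / p^n" by (rule theta_p) (use p in auto)
  then show ?case using Suc by simp
qed

lemma theta_powi_zero: fixes p :: complex assumes p: "norm p < 1" "p \<noteq> 0"
  shows "theta (p powi k) p = 0"
proof (cases k rule: int_cases)
  case (nonneg n) then show ?thesis using theta_pow_zero[OF p] by simp
next
  case (neg n)
  have "p powi k = 1 / p ^ Suc n" unfolding neg power_int_minus power_int_of_nat by (simp add: divide_inverse)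
  moreover have "theta (1 / p ^ Suc n) p = - theta (p ^ Suc n) p / p ^ Suc n"
    by (rule theta_inv) (use p in auto)
  ultimately show ?thesis using theta_pow_zero[OF p, of "Suc n"] by simp
qed

lemma theta_zero_imp: fixes p x :: complex assumes p: "norm p < 1" "p \<noteq> 0" and x: "x \<noteq> 0"
  and z: "theta x p = 0" shows "\<exists>k. x = p powi k"
proof -
  from z have "qpinf x p = 0 \<or> qpinf (p/x) p = 0" by (simp add: theta_def)
  then show ?thesis
  proof
    assume "qpinf x p = 0"
    then obtain k where k: "x * p^k = 1" using qp_zero_iff[OF p(1)] by blast
    then have "x = 1 / p^k" using p(2) by (simp add: field_simps)
    then have "x = p powi (- int k)" by (simp add: power_int_minus divide_inverse)
    then show ?thesis by blast
  next
    assume "qpinf (p/x) p = 0"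
    then obtain k where k: "p / x * p^k = 1" using qp_zero_iff[OF p(1)] by blast
    then have "x = p ^ Suc k" using x by (simp add: field_simps)
    moreover have "p powi (int (Suc k)) = p ^ Suc k" by (rule power_int_of_nat)
    ultimately have "x = p powi (int (Suc k))" by simp
    then show ?thesis by blast
  qed
qed

lemma theta_deriv_1: fixes p :: complex assumes p: "norm p < 1"
  shows "deriv (\<lambda>z. theta z p) 1 \<noteq> 0"
proof -
  define E where "E = (\<lambda>z. qpinf (p*z) p * qpinf (p/z) p)"
  have eq: "(\<lambda>z. theta z p) = (\<lambda>z. (1 - z) * E z)"
  proof
    fix z show "theta z p = (1 - z) * E z" using qp_shift[OF p, of z] by (simp add: theta_def E_def)
  qed
  have Eh: "E holomorphic_on -{0}" unfolding E_def by (intro holomorphic_intros p) auto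
  have "(E has_field_derivative deriv E 1) (at 1)"
    by (rule holomorphic_derivI[OF Eh]) auto
  then have "((\<lambda>z. (1 - z) * E z) has_field_derivative (-1 * E 1 + (1 - 1) * deriv E 1)) (at 1)"
    by (intro derivative_eq_intros) auto
  then have d: "deriv (\<lambda>z. theta z p) 1 = - E 1" unfolding eq by (simp add: DERIV_imp_deriv)
  have "qpinf p p \<noteq> 0"
  proof
    assume "qpinf p p = 0"
    then obtain k where k: "p * p^k = 1" using qp_zero_iff[OF p] by blast
    have "norm (p * p^k) = norm p ^ Suc k" by (simp add: norm_mult norm_power)
    also have "\<dots> = norm p * norm p ^ k" by simp
    also have "\<dots> \<le> norm p * 1" by (intro mult_left_mono power_le_one) (use p in auto)
    also have "\<dots> < 1" using p by simp
    finally show False using k by simp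
  qed
  then have "E 1 \<noteq> 0" by (simp add: E_def)
  then show ?thesis using d by simp
qed

lemma theta_deriv_p: fixes p x :: complex assumes p: "norm p < 1" "p \<noteq> 0" and x: "x \<noteq> 0"
  and z: "theta x p = 0"
  shows "deriv (\<lambda>z. theta z p) (p * x) = - deriv (\<lambda>z. theta z p) x / (p * x)"
proof -
  define T where "T = (\<lambda>z. theta z p)"
  have Th: "T holomorphic_on -{0}" unfolding T_def by (rule theta_holo[OF p(1)])
  have d1: "(T has_field_derivative deriv T (p*x)) (at (p*x))"
    by (rule holomorphic_derivI[OF Th]) (use p x in auto)
  have d2: "(T has_field_derivative deriv T x) (at x)"
    by (rule holomorphic_derivI[OF Th]) (use x in auto)
  have "((\<lambda>z. T (p*z)) has_field_derivative deriv T (p*x) * p) (at x)"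
    by (rule DERIV_chain2[where f=T and g="\<lambda>z. p*z", OF d1]) (auto intro!: derivative_eq_intros)
  then have A: "((\<lambda>z. - T z / z) has_field_derivative deriv T (p*x) * p) (at x)"
  proof (rule has_field_derivative_transform_within_open[where S = "-{0}"])
    fix z :: complex assume "z \<in> -{0}"
    then show "T (p*z) = - T z / z" unfolding T_def using theta_p[OF p] by simp
  qed (use x in auto)
  have B: "((\<lambda>z. - T z / z) has_field_derivative (- (deriv T x * x - T x * 1) / (x * x))) (at x)"
    using d2 x by (auto intro!: derivative_eq_intros simp: field_simps)
  have "deriv T (p*x) * p = - (deriv T x * x - T x * 1) / (x * x)" by (rule DERIV_unique[OF A B])
  then have "deriv T (p*x) * p = - deriv T x / x" using z x by (simp add: T_def field_simps)
  then show ?thesis using p x unfolding T_def[symmetric] by (simp add: field_simps)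
qed

lemma theta_deriv_zero: fixes p :: complex assumes p: "norm p < 1" "p \<noteq> 0"
  shows "deriv (\<lambda>z. theta z p) (p powi k) \<noteq> 0"
proof -
  have pos: "deriv (\<lambda>z. theta z p) (p ^ n) \<noteq> 0" for n
  proof (induction n)
    case 0 then show ?case using theta_deriv_1[OF p(1)] by simp
  next
    case (Suc n)
    have "deriv (\<lambda>z. theta z p) (p * p^n) = - deriv (\<lambda>z. theta z p) (p^n) / (p * p^n)"
      by (rule theta_deriv_p[OF p]) (use p theta_pow_zero[OF p] in auto)
    then show ?case using Suc p by simp
  qed
  have negs: "deriv (\<lambda>z. theta z p) (1 / p ^ n) \<noteq> 0" for n
  proof (induction n)
    case 0 then show ?case using theta_deriv_1[OF p(1)] by simp
  next
    case (Suc n)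
    have z: "theta (1 / p ^ Suc n) p = 0"
      using theta_inv[OF p(1), of "p ^ Suc n"] theta_pow_zero[OF p, of "Suc n"] p by simp
    have "deriv (\<lambda>z. theta z p) (p * (1 / p ^ Suc n)) = - deriv (\<lambda>z. theta z p) (1 / p ^ Suc n) / (p * (1 / p ^ Suc n))"
      by (rule theta_deriv_p[OF p _ z]) (use p in auto)
    moreover have "p * (1 / p ^ Suc n) = 1 / p ^ n" using p by (simp add: field_simps)
    ultimately show ?case using Suc by auto
  qed
  show ?thesis
  proof (cases k rule: int_cases)
    case (nonneg n) then show ?thesis using pos by simp
  next
    case (neg n)
    have "p powi k = 1 / p ^ Suc n" unfolding neg power_int_minus power_int_of_nat by (simp add: divide_inverse)
    then show ?thesis using negs[of "Suc n"] by simp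
  qed
qed

lemma nonzero_ball:
  fixes h :: "complex \<Rightarrow> complex"
  assumes S: "open S" and hc: "continuous_on S h" and z: "z \<in> S" and hz: "h z \<noteq> 0"
  obtains e where "e > 0" "ball z e \<subseteq> S" "\<And>w. w \<in> ball z e \<Longrightarrow> h w \<noteq> 0"
proof -
  have "open (S \<inter> h -` (-{0}))" by (rule continuous_open_preimage[OF hc S]) auto
  moreover have "z \<in> S \<inter> h -` (-{0})" using z hz by auto
  ultimately obtain e where e: "e > 0" "ball z e \<subseteq> S \<inter> h -` (-{0})" by (meson openE)
  show ?thesis
  proof (rule that[of e])
    show "e > 0" "ball z e \<subseteq> S" using e by auto
    fix w assume "w \<in> ball z e" then show "h w \<noteq> 0" using e(2) by blast
  qed
qed

lemma removable_quot:
  fixes f h :: "complex \<Rightarrow> complex"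
  assumes S: "open S" and fh: "f holomorphic_on S" and hh: "h holomorphic_on S"
    and zz: "\<And>z. z \<in> S \<Longrightarrow> h z = 0 \<Longrightarrow> f z = 0 \<and> deriv h z \<noteq> 0"
  shows "(\<lambda>z. if h z = 0 then deriv f z / deriv h z else f z / h z) holomorphic_on S"
proof -
  let ?g = "\<lambda>z. if h z = 0 then deriv f z / deriv h z else f z / h z"
  have "?g analytic_on S"
    unfolding analytic_on_def
  proof
    fix z0 assume z0: "z0 \<in> S"
    show "\<exists>e>0. ?g holomorphic_on ball z0 e"
    proof (cases "h z0 = 0")
      case False
      obtain e where e: "e > 0" "ball z0 e \<subseteq> S" "\<And>w. w \<in> ball z0 e \<Longrightarrow> h w \<noteq> 0"
        using nonzero_ball[OF S holomorphic_on_imp_continuous_on[OF hh] z0 False] by blast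
      have "(\<lambda>z. f z / h z) holomorphic_on ball z0 e"
        by (intro holomorphic_intros holomorphic_on_subset[OF fh e(2)] holomorphic_on_subset[OF hh e(2)] e(3))
      then have "?g holomorphic_on ball z0 e"
        by (rule holomorphic_transform) (use e(3) in auto)
      then show ?thesis using e(1) by blast
    next
      case True
      define F where "F = (\<lambda>z. if z = z0 then deriv f z0 else (f z - f z0) / (z - z0))"
      define H where "H = (\<lambda>z. if z = z0 then deriv h z0 else (h z - h z0) / (z - z0))"
      have Fh: "F holomorphic_on S" unfolding F_def by (rule pole_lemma_open[OF fh S])
      have Hh: "H holomorphic_on S" unfolding H_def by (rule pole_lemma_open[OF hh S])
      have fz0: "f z0 = 0" and dh: "deriv h z0 \<noteq> 0" using zz[OF z0 True] by auto
      have "H z0 \<noteq> 0" using dh by (simp add: H_def)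
      then obtain e where e: "e > 0" "ball z0 e \<subseteq> S" "\<And>w. w \<in> ball z0 e \<Longrightarrow> H w \<noteq> 0"
        using nonzero_ball[OF S holomorphic_on_imp_continuous_on[OF Hh] z0] by blast
      have "(\<lambda>z. F z / H z) holomorphic_on ball z0 e"
        by (intro holomorphic_intros holomorphic_on_subset[OF Fh e(2)] holomorphic_on_subset[OF Hh e(2)] e(3))
      moreover have "F w / H w = ?g w" if w: "w \<in> ball z0 e" for w
      proof (cases "w = z0")
        case True then show ?thesis using \<open>h z0 = 0\<close> by (simp add: F_def H_def)
      next
        case False
        have "H w \<noteq> 0" using e(3)[OF w] .
        then have hw: "h w \<noteq> 0" using False True by (simp add: H_def)
        have "F w / H w = ((f w - f z0) / (w - z0)) / ((h w - h z0) / (w - z0))"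
          using False by (simp add: F_def H_def)
        also have "\<dots> = f w / h w" using False True fz0 hw by (simp add: field_simps)
        finally show ?thesis using hw by simp
      qed
      ultimately have "?g holomorphic_on ball z0 e" by (rule holomorphic_transform)
      then show ?thesis using e(1) by blast
    qed
  qed
  then show ?thesis by (rule analytic_imp_holomorphic)
qed

lemma periodic_int:
  fixes H :: "complex \<Rightarrow> complex"
  assumes "\<And>w. H (w + L) = H w"
  shows "H (w + of_int m * L) = H w"
proof (induction m arbitrary: w rule: int_induct[where k = 0])
  case base then show ?case by simp
next
  case (step1 i)
  have "H (w + of_int (i + 1) * L) = H ((w + of_int i * L) + L)" by (simp add: algebra_simps)
  also have "\<dots> = H w" using assms step1 by simp
  finally show ?case .
next
  case (step2 i)
  have "H (w + of_int (i - 1) * L) = H ((w + of_int (i - 1) * L) + L)" using assms by simp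
  also have "\<dots> = H (w + of_int i * L)" by (simp add: algebra_simps)
  also have "\<dots> = H w" using step2 by simp
  finally show ?case .
qed

lemma elliptic_const:
  fixes G :: "complex \<Rightarrow> complex" and p :: complex
  assumes p: "norm p < 1" "p \<noteq> 0" and Gh: "G holomorphic_on -{0}"
    and per: "\<And>x. x \<noteq> 0 \<Longrightarrow> G (p * x) = G x"
    and x: "x \<noteq> 0" and y: "y \<noteq> 0"
  shows "G x = G y"
proof -
  define H where "H = (\<lambda>w. G (exp w))"
  define L where "L = Ln p"
  have eL: "exp L = p" using p by (simp add: L_def)
  have ReL: "Re L < 0" using p by (simp add: L_def)
  have Hh: "H holomorphic_on UNIV"
  proof -
    have "(G \<circ> exp) holomorphic_on UNIV"
      by (rule holomorphic_on_compose[OF holomorphic_on_exp holomorphic_on_subset[OF Gh]]) auto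
    then show ?thesis by (simp add: H_def o_def)
  qed
  have perL: "H (w + L) = H w" for w
    unfolding H_def using per[of "exp w"] by (simp add: exp_add eL mult.commute)
  have per2: "H (w + 2 * pi * \<i>) = H w" for w
    unfolding H_def using exp_plus_2pin[of w 1] by (simp add: mult_ac)
  define K where "K = {z. Re L \<le> Re z \<and> Re z \<le> 0 \<and> 0 \<le> Im z \<and> Im z \<le> 2 * pi}"
  have cK: "compact K"
  proof (rule compact_eq_bounded_closed[THEN iffD2], rule conjI)
    show "closed K" unfolding K_def
      by (intro closed_Collect_conj closed_Collect_le continuous_intros)
    show "bounded K" unfolding bounded_iff
    proof (intro exI ballI)
      fix z assume "z \<in> K"
      then have "\<bar>Re z\<bar> \<le> - Re L" "\<bar>Im z\<bar> \<le> 2 * pi" using ReL by (auto simp: K_def)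
      then show "norm z \<le> - Re L + 2 * pi" using cmod_le[of z] by linarith
    qed
  qed
  have red: "\<exists>w' \<in> K. H w = H w'" for w
  proof -
    define m where "m = floor (Re w / Re L)"
    define w1 where "w1 = w + of_int (- m) * L"
    have H1: "H w1 = H w" unfolding w1_def by (rule periodic_int[where H=H and L=L, OF perL])
    have m1: "of_int m \<le> Re w / Re L" "Re w / Re L < of_int m + 1" unfolding m_def by linarith+
    have "Re w1 = Re w - of_int m * Re L" by (simp add: w1_def)
    moreover have "of_int m * Re L \<ge> Re w" using m1(1) ReL by (simp add: field_simps)
    moreover have "(of_int m + 1) * Re L < Re w" using m1(2) ReL by (simp add: field_simps)
    ultimately have re1: "Re L \<le> Re w1" "Re w1 \<le> 0" by (auto simp: algebra_simps)
    define n where "n = floor (Im w1 / (2 * pi))"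
    define w2 where "w2 = w1 + of_int (- n) * (2 * pi * \<i>)"
    have H2: "H w2 = H w1" unfolding w2_def by (rule periodic_int[where H=H and L="2 * pi * \<i>", OF per2])
    have n1: "of_int n \<le> Im w1 / (2 * pi)" "Im w1 / (2 * pi) < of_int n + 1" unfolding n_def by linarith+
    have "Im w2 = Im w1 - of_int n * (2 * pi)" by (simp add: w2_def)
    moreover have "of_int n * (2 * pi) \<le> Im w1" using n1(1) pi_gt_zero by (simp add: field_simps)
    moreover have "Im w1 < (of_int n + 1) * (2 * pi)" using n1(2) pi_gt_zero by (simp add: field_simps)
    ultimately have im2: "0 \<le> Im w2" "Im w2 \<le> 2 * pi" by (auto simp: algebra_simps)
    have "Re w2 = Re w1" by (simp add: w2_def)
    then have "w2 \<in> K" using re1 im2 by (simp add: K_def)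
    then show ?thesis using H1 H2 by metis
  qed
  have "bounded (H ` K)"
    by (intro compact_imp_bounded compact_continuous_image cK holomorphic_on_imp_continuous_on holomorphic_on_subset[OF Hh]) auto
  moreover have "range H \<subseteq> H ` K" using red by blast
  ultimately have "bounded (range H)" by (rule bounded_subset)
  then have "H constant_on UNIV" by (rule Liouville_theorem[OF Hh])
  then have "H (Ln x) = H (Ln y)" unfolding constant_on_def by auto
  then show ?thesis using x y by (simp add: H_def)
qed

definition addf :: "complex \<Rightarrow> complex \<Rightarrow> complex \<Rightarrow> complex \<Rightarrow> complex \<Rightarrow> complex" where
  "addf p Y U V x = theta (x*Y) p * theta (x/Y) p * theta (U*V) p * theta (U/V) p
     - theta (x*V) p * theta (x/V) p * theta (U*Y) p * theta (U/Y) p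
     - U/Y * theta (Y*V) p * theta (Y/V) p * theta (x*U) p * theta (x/U) p"

lemma theta_pair:
  fixes p x a :: complex assumes p: "norm p < 1" "p \<noteq> 0" and x: "x \<noteq> 0" and a: "a \<noteq> 0"
  shows "theta (p*x*a) p * theta (p*x/a) p = theta (x*a) p * theta (x/a) p / x^2"
proof -
  have 1: "theta (p*x*a) p = - theta (x*a) p / (x*a)"
    using theta_p[OF p, of "x*a"] x a by (simp add: mult.assoc)
  have 2: "theta (p*x/a) p = - theta (x/a) p / (x/a)"
    using theta_p[OF p, of "x/a"] x a by (simp add: mult.assoc times_divide_eq_right)
  show ?thesis unfolding 1 2 using x a by (simp add: field_simps power2_eq_square)
qed

lemma addf_per:
  assumes p: "norm p < 1" "p \<noteq> 0" and nz: "Y \<noteq> 0" "U \<noteq> 0" "V \<noteq> 0" and x: "x \<noteq> 0"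
  shows "addf p Y U V (p*x) = addf p Y U V x / x^2"
proof -
  have a: "theta (p*x*Y) p * theta (p*x/Y) p = theta (x*Y) p * theta (x/Y) p / x^2"
    by (rule theta_pair[OF p x nz(1)])
  have b: "theta (p*x*V) p * theta (p*x/V) p = theta (x*V) p * theta (x/V) p / x^2"
    by (rule theta_pair[OF p x nz(3)])
  have c: "theta (p*x*U) p * theta (p*x/U) p = theta (x*U) p * theta (x/U) p / x^2"
    by (rule theta_pair[OF p x nz(2)])
  have "addf p Y U V (p*x) = (theta (p*x*Y) p * theta (p*x/Y) p) * theta (U*V) p * theta (U/V) p
     - (theta (p*x*V) p * theta (p*x/V) p) * theta (U*Y) p * theta (U/Y) p
     - U/Y * theta (Y*V) p * theta (Y/V) p * (theta (p*x*U) p * theta (p*x/U) p)"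
    by (simp add: addf_def mult_ac)
  also have "\<dots> = addf p Y U V x / x^2" unfolding a b c addf_def using x nz by (simp add: field_simps)
  finally show ?thesis .
qed

lemma deriv_per:
  fixes F :: "complex \<Rightarrow> complex"
  assumes p: "p \<noteq> 0" and Fh: "F holomorphic_on -{0}" and per: "\<And>z. z \<noteq> 0 \<Longrightarrow> F (p*z) = F z / z^2"
    and x: "x \<noteq> 0" and z: "F x = 0"
  shows "deriv F (p * x) = deriv F x / (p * x^2)"
proof -
  have d1: "(F has_field_derivative deriv F (p*x)) (at (p*x))"
    by (rule holomorphic_derivI[OF Fh]) (use p x in auto)
  have d2: "(F has_field_derivative deriv F x) (at x)"
    by (rule holomorphic_derivI[OF Fh]) (use x in auto)
  have "((\<lambda>z. F (p*z)) has_field_derivative deriv F (p*x) * p) (at x)"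
    by (rule DERIV_chain2[where f=F and g="\<lambda>z. p*z", OF d1]) (auto intro!: derivative_eq_intros)
  then have A: "((\<lambda>z. F z / z^2) has_field_derivative deriv F (p*x) * p) (at x)"
  proof (rule has_field_derivative_transform_within_open[where S = "-{0}"])
    fix z :: complex assume "z \<in> -{0}"
    then show "F (p*z) = F z / z^2" using per by simp
  qed (use x in auto)
  have B: "((\<lambda>z. F z / z^2) has_field_derivative ((deriv F x * x^2 - F x * (2 * x)) / (x^2 * x^2))) (at x)"
    using d2 x by (auto intro!: derivative_eq_intros simp: field_simps power2_eq_square)
  have "deriv F (p*x) * p = (deriv F x * x^2 - F x * (2 * x)) / (x^2 * x^2)" by (rule DERIV_unique[OF A B])
  then show ?thesis using z x p by (simp add: field_simps power2_eq_square)
qed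

lemma addf_zero_shift:
  assumes p: "norm p < 1" "p \<noteq> 0" and nz: "Y \<noteq> 0" "U \<noteq> 0" "V \<noteq> 0" and x0: "x0 \<noteq> 0"
    and z: "addf p Y U V x0 = 0"
  shows "addf p Y U V (p powi k * x0) = 0"
proof (induction k rule: int_induct[where k = 0])
  case base then show ?case using z by simp
next
  case (step1 i)
  have "p powi (i + 1) * x0 = p * (p powi i * x0)" using p by (simp add: power_int_add_1')
  moreover have "p powi i * x0 \<noteq> 0" using p x0 by simp
  ultimately show ?case using addf_per[OF p nz, of "p powi i * x0"] step1 by (simp add: mult.assoc)
next
  case (step2 i)
  have "p powi i * x0 = p * (p powi (i - 1) * x0)"
    using p power_int_minus_mult[of p i] by (simp add: mult_ac)
  moreover have "p powi (i - 1) * x0 \<noteq> 0" using p x0 by simp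
  ultimately have "addf p Y U V (p powi (i - 1) * x0) / (p powi (i - 1) * x0)^2 = 0"
    using addf_per[OF p nz, of "p powi (i - 1) * x0"] step2 by (simp add: mult.assoc)
  then show ?case using \<open>p powi (i - 1) * x0 \<noteq> 0\<close> p(2) by simp
qed

lemma divide_cancel_right_denoms: "(c::complex) \<noteq> 0 \<Longrightarrow> (a / c) / (b / c) = a / b"
  by (cases "b = 0") (simp_all add: field_simps)

lemma addf_generic:
  fixes p Y U V x :: complex
  assumes p: "norm p < 1" "p \<noteq> 0" and nz: "Y \<noteq> 0" "U \<noteq> 0" "V \<noteq> 0"
    and gen: "theta (U*U) p \<noteq> 0" "theta (Y*U) p \<noteq> 0" "theta (Y/U) p \<noteq> 0"
    and x: "x \<noteq> 0"
  shows "addf p Y U V x = 0"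
proof -
  define T where "T = (\<lambda>z. theta z p)"
  define f where "f = addf p Y U V"
  define h where "h = (\<lambda>x. theta (x*U) p * theta (x/U) p)"
  have Th: "T holomorphic_on -{0}" unfolding T_def by (rule theta_holo[OF p(1)])
  have fh: "f holomorphic_on -{0}" unfolding f_def addf_def[abs_def]
    using nz by (intro holomorphic_intros p) auto
  have hh: "h holomorphic_on -{0}" unfolding h_def
    using nz by (intro holomorphic_intros p) auto
  have fper: "f (p*z) = f z / z^2" if "z \<noteq> 0" for z
    unfolding f_def by (rule addf_per[OF p nz that])
  have hper: "h (p*z) = h z / z^2" if "z \<noteq> 0" for z
    unfolding h_def by (rule theta_pair[OF p that nz(2)])
  have fU: "f U = 0" unfolding f_def addf_def using theta_1[OF p(1)] nz by (simp add: mult_ac)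
  have fU': "f (1/U) = 0"
  proof -
    have 1: "theta ((1/U)*Y) p = - theta (U/Y) p / (U/Y)"
      using theta_inv[OF p(1), of "U/Y"] nz by simp
    have 2: "theta ((1/U)/Y) p = - theta (U*Y) p / (U*Y)"
      using theta_inv[OF p(1), of "U*Y"] nz by simp
    have 3: "theta ((1/U)*V) p = - theta (U/V) p / (U/V)"
      using theta_inv[OF p(1), of "U/V"] nz by simp
    have 4: "theta ((1/U)/V) p = - theta (U*V) p / (U*V)"
      using theta_inv[OF p(1), of "U*V"] nz by simp
    have 5: "theta ((1/U)*U) p = 0" using theta_1[OF p(1)] nz by simp
    show ?thesis unfolding f_def addf_def 1 2 3 4 5 using nz by (simp add: field_simps)
  qed
  have fY: "f Y = 0"
  proof -
    have 1: "theta (Y/U) p = - theta (U/Y) p / (U/Y)"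
      using theta_inv[OF p(1), of "U/Y"] nz by simp
    have 5: "theta (Y/Y) p = 0" using theta_1[OF p(1)] nz by simp
    show ?thesis unfolding f_def addf_def 1 5 using nz by (simp add: field_simps)
  qed
  have zeros: "f z = 0 \<and> deriv h z \<noteq> 0" if z: "z \<noteq> 0" "h z = 0" for z
  proof -
    have dT: "(T has_field_derivative deriv T w) (at w)" if "w \<noteq> 0" for w
      by (rule holomorphic_derivI[OF Th]) (use that in auto)
    have "((\<lambda>x. T (x*U)) has_field_derivative deriv T (z*U) * U) (at z)"
      by (rule DERIV_chain2[where f=T and g="\<lambda>x. x*U", OF dT]) (use z nz in \<open>auto intro!: derivative_eq_intros\<close>)
    moreover have "((\<lambda>x. T (x/U)) has_field_derivative deriv T (z/U) * (1/U)) (at z)"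
      by (rule DERIV_chain2[where f=T and g="\<lambda>x. x/U", OF dT]) (use z nz in \<open>auto intro!: derivative_eq_intros\<close>)
    ultimately have "((\<lambda>x. T (x*U) * T (x/U)) has_field_derivative
        (deriv T (z*U) * U) * T (z/U) + (deriv T (z/U) * (1/U)) * T (z*U)) (at z)"
      by (rule DERIV_mult)
    then have dh: "deriv h z = (deriv T (z*U) * U) * T (z/U) + (deriv T (z/U) * (1/U)) * T (z*U)"
      unfolding h_def T_def by (rule DERIV_imp_deriv)
    have "T (z*U) = 0 \<or> T (z/U) = 0" using z(2) by (simp add: h_def T_def)
    then show ?thesis
    proof
      assume A: "T (z*U) = 0"
      obtain k where k: "z*U = p powi k" using theta_zero_imp[OF p _ A[unfolded T_def]] z nz by auto
      have "z = p powi k * (1/U)" using k nz by (simp add: field_simps)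
      then have "f z = 0" unfolding f_def using addf_zero_shift[OF p nz _ fU'[unfolded f_def]] nz by simp
      moreover have "T (z/U) \<noteq> 0"
      proof
        assume B: "T (z/U) = 0"
        obtain j where j: "z/U = p powi j" using theta_zero_imp[OF p _ B[unfolded T_def]] z nz by auto
        have "U*U = (z*U)/(z/U)" using z nz by (simp add: field_simps)
        also have "\<dots> = p powi (k - j)" using k j p by (simp add: power_int_diff)
        finally have "theta (U*U) p = 0" using theta_powi_zero[OF p] by simp
        then show False using gen by simp
      qed
      moreover have "deriv T (z*U) \<noteq> 0" unfolding k T_def by (rule theta_deriv_zero[OF p])
      ultimately show ?thesis using dh A nz by simp
    next
      assume B: "T (z/U) = 0"
      obtain k where k: "z/U = p powi k" using theta_zero_imp[OF p _ B[unfolded T_def]] z nz by auto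
      have "z = p powi k * U" using k nz by (simp add: field_simps)
      then have "f z = 0" unfolding f_def using addf_zero_shift[OF p nz _ fU[unfolded f_def]] nz by simp
      moreover have "T (z*U) \<noteq> 0"
      proof
        assume A: "T (z*U) = 0"
        obtain j where j: "z*U = p powi j" using theta_zero_imp[OF p _ A[unfolded T_def]] z nz by auto
        have "U*U = (z*U)/(z/U)" using z nz by (simp add: field_simps)
        also have "\<dots> = p powi (j - k)" using k j p by (simp add: power_int_diff)
        finally have "theta (U*U) p = 0" using theta_powi_zero[OF p] by simp
        then show False using gen by simp
      qed
      moreover have "deriv T (z/U) \<noteq> 0" unfolding k T_def by (rule theta_deriv_zero[OF p])
      ultimately show ?thesis using dh B nz by simp
    qed
  qed
  define G where "G = (\<lambda>z. if h z = 0 then deriv f z / deriv h z else f z / h z)"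
  have Gh: "G holomorphic_on -{0}" unfolding G_def
    by (rule removable_quot[OF _ fh hh]) (use zeros in auto)
  have Gper: "G (p*z) = G z" if z: "z \<noteq> 0" for z
  proof (cases "h z = 0")
    case True
    have "h (p*z) = 0" using hper[OF z] True by simp
    moreover have "deriv f (p*z) = deriv f z / (p * z^2)"
      by (rule deriv_per[OF p(2) fh fper z]) (use zeros[OF z True] in auto)
    moreover have "deriv h (p*z) = deriv h z / (p * z^2)"
      by (rule deriv_per[OF p(2) hh hper z True])
    moreover have c: "p * z^2 \<noteq> 0" using p z by simp
    moreover have "(deriv f z / (p * z^2)) / (deriv h z / (p * z^2)) = deriv f z / deriv h z"
      using c by (rule divide_cancel_right_denoms)
    ultimately show ?thesis using True by (simp add: G_def)
  next
    case False
    have "h (p*z) \<noteq> 0" using hper[OF z] False z by simp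
    then have "G (p*z) = (f z / z^2) / (h z / z^2)" using fper[OF z] hper[OF z] by (simp add: G_def)
    also have "\<dots> = f z / h z" by (rule divide_cancel_right_denoms) (use z in simp)
    finally show ?thesis using False by (simp add: G_def)
  qed
  have "G x = G Y" by (rule elliptic_const[OF p Gh Gper x nz(1)])
  moreover have hY: "h Y \<noteq> 0" using gen by (simp add: h_def)
  ultimately have Gx: "G x = 0" using fY by (simp add: G_def)
  show ?thesis
  proof (cases "h x = 0")
    case True then show ?thesis using zeros[OF x] by (simp add: f_def)
  next
    case False then show ?thesis using Gx by (simp add: G_def f_def)
  qed
qed

lemma sq_eq_countable: "countable {U :: complex. U * U = c}"
proof (rule countable_subset)
  show "{U :: complex. U * U = c} \<subseteq> {csqrt c, - csqrt c}"
  proof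
    fix U :: complex assume "U \<in> {U. U * U = c}"
    then have "U * U = csqrt c * csqrt c" by (simp add: power2_eq_square[symmetric])
    then have "(U - csqrt c) * (U + csqrt c) = 0" by (simp add: algebra_simps)
    then show "U \<in> {csqrt c, - csqrt c}" by (auto simp: add_eq_0_iff)
  qed
qed auto

lemma addf_all_U:
  fixes p Y U V x :: complex
  assumes p: "norm p < 1" "p \<noteq> 0" and nz: "Y \<noteq> 0" "U \<noteq> 0" "V \<noteq> 0" and x: "x \<noteq> 0"
  shows "addf p Y U V x = 0"
proof (rule ccontr)
  assume ne: "addf p Y U V x \<noteq> 0"
  define F where "F = (\<lambda>u. addf p Y u V x)"
  have Fc: "continuous_on (-{0}) F" unfolding F_def addf_def[abs_def]
    using nz x by (intro continuous_intros p) auto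
  define B where "B = (\<Union>k::int. {u :: complex. u * u = p powi k} \<union> {p powi k / Y} \<union> {Y / p powi k})"
  have cB: "countable B" unfolding B_def
    by (intro countable_UN[OF countableI_type] countable_Un sq_eq_countable) auto
  have good: "F u = 0" if u: "u \<noteq> 0" "u \<notin> B" for u
  proof -
    have g1: "theta (u*u) p \<noteq> 0"
    proof
      assume z: "theta (u*u) p = 0"
      obtain k where "u*u = p powi k" using theta_zero_imp[OF p _ z] u by auto
      then show False using u(2) by (auto simp: B_def)
    qed
    have g2: "theta (Y*u) p \<noteq> 0"
    proof
      assume z: "theta (Y*u) p = 0"
      obtain k where "Y*u = p powi k" using theta_zero_imp[OF p _ z] u nz by auto
      then have "u = p powi k / Y" using nz by (simp add: field_simps)
      then show False using u(2) by (auto simp: B_def)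
    qed
    have g3: "theta (Y/u) p \<noteq> 0"
    proof
      assume z: "theta (Y/u) p = 0"
      obtain k where k: "Y/u = p powi k" using theta_zero_imp[OF p _ z] u nz by auto
      then have "u = Y / p powi k" using nz u p by (auto simp: field_simps)
      then show False using u(2) by (auto simp: B_def)
    qed
    show ?thesis unfolding F_def by (rule addf_generic[OF p nz(1) u(1) nz(3) g1 g2 g3 x])
  qed
  have "open (-{0} \<inter> F -` (-{0}))" by (rule continuous_open_preimage[OF Fc]) auto
  moreover have "U \<in> -{0} \<inter> F -` (-{0})" using ne nz by (auto simp: F_def)
  ultimately obtain e where e: "e > 0" "ball U e \<subseteq> -{0} \<inter> F -` (-{0})" by (meson openE)
  obtain u where "u \<in> ball U e - B" using ball_minus_countable_nonempty[OF cB e(1), of U] by blast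
  then show False using e(2) good by blast
qed

lemma theta_p0: "theta x 0 = 1 - x"
proof -
  have q: "qpinf y 0 = (1 - y) * qpinf 0 0" for y using qp_shift[of 0 y] by simp
  have "qpinf 0 0 = 1" by (simp add: qpinf_def)
  then show ?thesis using q[of x] q[of "0/x"] by (simp add: theta_def)
qed

lemma theta_addition:
  fixes p X Y U V :: complex
  assumes p: "norm p < 1" and nz: "X \<noteq> 0" "Y \<noteq> 0" "U \<noteq> 0" "V \<noteq> 0"
  shows "theta (X*Y) p * theta (X/Y) p * theta (U*V) p * theta (U/V) p
     - theta (X*V) p * theta (X/V) p * theta (U*Y) p * theta (U/Y) p
     = U/Y * theta (Y*V) p * theta (Y/V) p * theta (X*U) p * theta (X/U) p"
proof (cases "p = 0")
  case True
  then show ?thesis using nz by (simp add: theta_p0 field_simps)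
next
  case False
  then show ?thesis using addf_all_U[OF p False nz(2,3,4,1)] by (simp add: addf_def)
qed

lemma theta_step:
  fixes p u B C Q :: complex
  assumes p: "norm p < 1" and nz: "u \<noteq> 0" "B \<noteq> 0" "C \<noteq> 0" "Q \<noteq> 0"
  shows "theta (u/Q^2) p * theta B p * theta C p * theta (u/(B*C)) p
     - theta Q p * theta (u/(B*Q)) p * theta (u/(C*Q)) p * theta (B*C/Q) p
     = Q * (theta (u/Q) p * theta (B/Q) p * theta (C/Q) p * theta (u/(B*C*Q)) p)"
proof -
  define X where "X = csqrt (u*B/Q^2)"
  have hX: "X * X = u*B/Q^2" unfolding X_def by (simp add: power2_eq_square[symmetric])
  have X0: "X \<noteq> 0" using nz by (simp add: X_def)
  define Y where "Y = u/(Q^2*X)"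
  define U where "U = X*Q/B"
  define V where "V = C*B/(X*Q)"
  have Y0: "Y \<noteq> 0" "U \<noteq> 0" "V \<noteq> 0" using nz X0 by (auto simp: Y_def U_def V_def)
  have hX': "X * X * Q^2 = u * B" using hX nz by (simp add: field_simps)
  have e1: "X*Y = u/Q^2" using X0 nz by (simp add: Y_def field_simps)
  have e2: "X/Y = B" using X0 nz hX' by (simp add: Y_def field_simps)
  have e3: "U*V = C" using X0 nz by (simp add: U_def V_def field_simps)
  have e4: "U/V = u/(B*C)" using X0 nz hX' by (simp add: U_def V_def field_simps power2_eq_square)
  have e5: "X*V = B*C/Q" using X0 nz by (simp add: V_def field_simps)
  have e6: "X/V = u/(C*Q)" using X0 nz hX' by (simp add: V_def field_simps power2_eq_square)
  have e7: "U*Y = u/(B*Q)" using X0 nz by (simp add: U_def Y_def field_simps power2_eq_square)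
  have e8: "U/Y = Q" using X0 nz hX' by (simp add: U_def Y_def field_simps power2_eq_square)
  have e9: "Y*V = C/Q" using X0 nz hX' by (simp add: V_def Y_def field_simps power2_eq_square)
  have e10: "Y/V = u/(B*C*Q)" using X0 nz by (simp add: V_def Y_def field_simps power2_eq_square)
  have e11: "X*U = u/Q" using X0 nz hX' by (simp add: U_def field_simps power2_eq_square)
  have e12: "X/U = B/Q" using X0 nz by (simp add: U_def field_simps)
  have "theta (X*Y) p * theta (X/Y) p * theta (U*V) p * theta (U/V) p
     - theta (X*V) p * theta (X/V) p * theta (U*Y) p * theta (U/Y) p
     = U/Y * theta (Y*V) p * theta (Y/V) p * theta (X*U) p * theta (X/U) p"
    by (rule theta_addition[OF p X0 Y0])
  then show ?thesis unfolding e1 e2 e3 e4 e5 e6 e7 e8 e9 e10 e11 e12 by (simp add: mult_ac)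
qed

lemma ellpoch_0 [simp]: "ellpoch x b p 0 = 1" by (simp add: ellpoch_def)

lemma ellpoch_Suc: "ellpoch x b p (Suc m) = ellpoch x b p m * theta (x*b^m) p"
  by (simp add: ellpoch_def)

lemma ellpoch_Suc_left: "ellpoch x b p (Suc m) = theta x p * ellpoch (x*b) b p m"
  unfolding ellpoch_def prod.lessThan_Suc_shift by (simp add: mult_ac)

definition mono_e :: "complex \<Rightarrow> complex \<Rightarrow> nat \<Rightarrow> nat \<Rightarrow> complex" where
  "mono_e al be n k = (\<Prod>i<k. - (al * be^(n-i)))"

lemma ell_rev:
  fixes al be p :: complex
  assumes p: "norm p < 1" and nz: "al \<noteq> 0" "be \<noteq> 0"
  shows "k \<le> n \<Longrightarrow> ellpoch (al*be) be p n = ellpoch (al*be) be p (n-k) * ellpoch (1/(be^n*al)) be p k * mono_e al be n k"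
proof (induction k)
  case 0 then show ?case by (simp add: mono_e_def)
next
  case (Suc k)
  define m where "m = n - Suc k"
  have nk: "n - k = Suc m" using Suc.prems by (simp add: m_def)
  define z where "z = al * be^(n-k)"
  have z0: "z \<noteq> 0" using nz by (simp add: z_def)
  have A: "ellpoch (al*be) be p (n-k) = ellpoch (al*be) be p m * theta z p"
    unfolding nk ellpoch_Suc z_def by (simp add: mult_ac)
  have bn: "be^n = be^(n-k) * be^k" using Suc.prems by (simp add: power_add[symmetric])
  have "1/(be^n*al) * be^k = 1/z" using nz unfolding z_def bn by (simp add: field_simps)
  then have B: "ellpoch (1/(be^n*al)) be p (Suc k) = ellpoch (1/(be^n*al)) be p k * (- theta z p / z)"
    unfolding ellpoch_Suc using theta_inv[OF p z0] by simp
  have C: "mono_e al be n (Suc k) = mono_e al be n k * (- z)"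
    by (simp add: mono_e_def z_def)
  have "ellpoch (al*be) be p n = ellpoch (al*be) be p m * theta z p * ellpoch (1/(be^n*al)) be p k * mono_e al be n k"
    using Suc.IH Suc.prems A by simp
  also have "\<dots> = ellpoch (al*be) be p (n - Suc k) * ellpoch (1/(be^n*al)) be p (Suc k) * mono_e al be n (Suc k)"
    unfolding B C m_def[symmetric] using z0 by (simp add: field_simps)
  finally show ?case .
qed

lemma ell_rev':
  fixes al be p x y :: complex
  assumes p: "norm p < 1" and nz: "al \<noteq> 0" "be \<noteq> 0" and k: "k \<le> n"
    and x: "x = al*be" and y: "y = 1/(be^n*al)"
  shows "ellpoch x be p n = ellpoch x be p (n-k) * ellpoch y be p k * mono_e al be n k"
  unfolding x y by (rule ell_rev[OF p nz k])

lemma psi_num_split: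
  fixes a b c q r s t p :: complex
  assumes p: "norm p < 1" and nz: "a \<noteq> 0" "b \<noteq> 0" "c \<noteq> 0" "q \<noteq> 0" "r \<noteq> 0" "s \<noteq> 0" "t \<noteq> 0"
    and k: "k \<le> n"
  shows "Psi_num a b c q r s t p n = Psi_num a b c q r s t p (n-k) * rho_den a b c q r s t p n k * (mono_e a (r * s * t/q^2) n k * mono_e b r n k * mono_e c s n k * mono_e (a/(b * c)) t n k)"
proof -
  have 1: "ellpoch (a * r * s * t/q^2) (r * s * t/q^2) p n = ellpoch (a * r * s * t/q^2) (r * s * t/q^2) p (n-k) * ellpoch ((q^2/(r * s * t))^n/a) (r * s * t/q^2) p k * mono_e a (r * s * t/q^2) n k"
    by (rule ell_rev'[OF p _ _ k]) (use nz in \<open>simp_all add: field_simps power_divide\<close>)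
  have 2: "ellpoch (b * r) r p n = ellpoch (b * r) r p (n-k) * ellpoch (1/(r^n * b)) r p k * mono_e b r n k"
    by (rule ell_rev'[OF p _ _ k]) (use nz in simp_all)
  have 3: "ellpoch (c * s) s p n = ellpoch (c * s) s p (n-k) * ellpoch (1/(s^n * c)) s p k * mono_e c s n k"
    by (rule ell_rev'[OF p _ _ k]) (use nz in simp_all)
  have 4: "ellpoch (a * t/(b * c)) t p n = ellpoch (a * t/(b * c)) t p (n-k) * ellpoch (b * c/(a * t^n)) t p k * mono_e (a/(b * c)) t n k"
    by (rule ell_rev'[OF p _ _ k]) (use nz in \<open>simp_all add: field_simps\<close>)
  show ?thesis unfolding Psi_num_def rho_den_def 1 2 3 4 by (simp add: mult_ac)
qed

lemma psi_den_split:
  fixes a b c q r s t p :: complex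
  assumes p: "norm p < 1" and nz: "a \<noteq> 0" "b \<noteq> 0" "c \<noteq> 0" "q \<noteq> 0" "r \<noteq> 0" "s \<noteq> 0" "t \<noteq> 0"
    and k: "k \<le> n"
  shows "Psi_den a b c q r s t p n = Psi_den a b c q r s t p (n-k) * rho_num a b c q r s t p n k * (mono_e 1 q n k * mono_e (a/b) (s * t/q) n k * mono_e (a/c) (r * t/q) n k * mono_e (b * c) (r * s/q) n k)"
proof -
  have 1: "ellpoch q q p n = ellpoch q q p (n-k) * ellpoch (1/q^n) q p k * mono_e 1 q n k"
    by (rule ell_rev'[OF p _ _ k]) (use nz in simp_all)
  have 2: "ellpoch (a * s * t/(b * q)) (s * t/q) p n = ellpoch (a * s * t/(b * q)) (s * t/q) p (n-k) * ellpoch (b * (q/(s * t))^n/a) (s * t/q) p k * mono_e (a/b) (s * t/q) n k"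
    by (rule ell_rev'[OF p _ _ k]) (use nz in \<open>simp_all add: field_simps power_divide\<close>)
  have 3: "ellpoch (a * r * t/(c * q)) (r * t/q) p n = ellpoch (a * r * t/(c * q)) (r * t/q) p (n-k) * ellpoch (c * (q/(r * t))^n/a) (r * t/q) p k * mono_e (a/c) (r * t/q) n k"
    by (rule ell_rev'[OF p _ _ k]) (use nz in \<open>simp_all add: field_simps power_divide\<close>)
  have 4: "ellpoch (b * c * r * s/q) (r * s/q) p n = ellpoch (b * c * r * s/q) (r * s/q) p (n-k) * ellpoch ((q/(r * s))^n/(b * c)) (r * s/q) p k * mono_e (b * c) (r * s/q) n k"
    by (rule ell_rev'[OF p _ _ k]) (use nz in \<open>simp_all add: field_simps power_divide\<close>)
  show ?thesis unfolding Psi_den_def rho_num_def 1 2 3 4 by (simp add: mult_ac)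
qed

lemma mono_eq:
  fixes a b c q r s t :: complex
  assumes nz: "a \<noteq> 0" "b \<noteq> 0" "c \<noteq> 0" "q \<noteq> 0" "r \<noteq> 0" "s \<noteq> 0" "t \<noteq> 0"
  shows "mono_e a (r * s * t/q^2) n k * mono_e b r n k * mono_e c s n k * mono_e (a/(b * c)) t n k =
     mono_e 1 q n k * mono_e (a/b) (s * t/q) n k * mono_e (a/c) (r * t/q) n k * mono_e (b * c) (r * s/q) n k"
proof -
  have pt: "(- (a * (r * s * t/q^2)^j)) * (- (b * r^j)) * (- (c * s^j)) * (- (a/(b * c) * t^j)) =
      (- (1 * q^j)) * (- (a/b * (s * t/q)^j)) * (- (a/c * (r * t/q)^j)) * (- (b * c * (r * s/q)^j))" for j :: nat
  proof -
    have "(q^2)^j = q^j * q^j" by (simp add: power_mult[symmetric] mult_2 power_add)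
    then show ?thesis using nz by (simp add: power_divide power_mult_distrib field_simps)
  qed
  show ?thesis unfolding mono_e_def prod.distrib[symmetric] using pt by (intro prod.cong) auto
qed

lemma psi_rho:
  fixes a b c q r s t p :: complex
  assumes p: "norm p < 1" and nz: "a \<noteq> 0" "b \<noteq> 0" "c \<noteq> 0" "q \<noteq> 0" "r \<noteq> 0" "s \<noteq> 0" "t \<noteq> 0"
    and k: "k \<le> n" and d1: "Psi_den a b c q r s t p n \<noteq> 0" and d2: "rho_den a b c q r s t p n k \<noteq> 0"
  shows "Psi a b c q r s t p n * rho a b c q r s t p n k = Psi a b c q r s t p (n-k)"
proof -
  note N = psi_num_split[OF p nz k] and D = psi_den_split[OF p nz k]
  note M = mono_eq[OF nz, of n k]
  define MD where "MD = mono_e 1 q n k * mono_e (a/b) (s * t/q) n k * mono_e (a/c) (r * t/q) n k * mono_e (b * c) (r * s/q) n k"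
  have "Psi_den a b c q r s t p (n-k) \<noteq> 0" "rho_num a b c q r s t p n k \<noteq> 0" "MD \<noteq> 0"
    using d1 unfolding D MD_def by auto
  then show ?thesis
    unfolding Psi_def rho_def N D M MD_def[symmetric] using d2 by (simp add: field_simps)
qed

lemma psi_num_nz:
  fixes a b c q r s t p :: complex
  assumes p: "norm p < 1" and nz: "a \<noteq> 0" "b \<noteq> 0" "c \<noteq> 0" "q \<noteq> 0" "r \<noteq> 0" "s \<noteq> 0" "t \<noteq> 0"
    and d1: "Psi_den a b c q r s t p n \<noteq> 0" and d2: "rho_den a b c q r s t p n n \<noteq> 0"
  shows "Psi_num a b c q r s t p n \<noteq> 0"
proof -
  note M = mono_eq[OF nz, of n n]
  define MD where "MD = mono_e 1 q n n * mono_e (a / b) (s * t / q) n n * mono_e (a / c) (r * t / q) n n * mono_e (b * c) (r * s / q) n n"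
  have N0: "Psi_num a b c q r s t p n = Psi_num a b c q r s t p 0 * rho_den a b c q r s t p n n * MD"
    using psi_num_split[OF p nz, of n n] M unfolding MD_def by simp
  have D0: "Psi_den a b c q r s t p n = Psi_den a b c q r s t p 0 * rho_num a b c q r s t p n n * MD"
    using psi_den_split[OF p nz, of n n] unfolding MD_def by simp
  have "MD \<noteq> 0" using d1 D0 by auto
  moreover have "Psi_num a b c q r s t p 0 = 1" by (simp add: Psi_num_def)
  ultimately show "Psi_num a b c q r s t p n \<noteq> 0" using N0 d2 by simp
qed

lemma mu_den_eq: "mu_den a b c q r s t p k =
   theta a p * theta b p * theta c p * theta (a / (b * c)) p * Psi_den a b c q r s t p k"
  by (simp add: mu_den_def Psi_den_def mult_ac)

lemma mu_0: assumes "mu_den a b c q r s t p 0 \<noteq> 0" shows "mu a b c q r s t p 0 = 1"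
  using assms by (simp add: mu_def mu_num_def mu_den_def)

lemma Psi_0: "Psi a b c q r s t p 0 = 1"
  by (simp add: Psi_def Psi_num_def Psi_den_def)

lemma psi_step:
  fixes a b c q r s t p :: complex
  assumes p: "norm p < 1" and nz: "a \<noteq> 0" "b \<noteq> 0" "c \<noteq> 0" "q \<noteq> 0" "r \<noteq> 0" "s \<noteq> 0" "t \<noteq> 0"
    and d: "mu_den a b c q r s t p (Suc j) \<noteq> 0"
  shows "Psi a b c q r s t p (Suc j) = Psi a b c q r s t p j + mu a b c q r s t p (Suc j) * q ^ Suc j"
proof -
  define Th4 where "Th4 = theta a p * theta b p * theta c p * theta (a / (b * c)) p"
  define Pn where "Pn = Psi_num a b c q r s t p j"
  define Pd where "Pd = Psi_den a b c q r s t p j"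
  define N where "N = theta (a * r * s * t / q^2 * (r * s * t / q^2)^j) p * theta (b * r * r^j) p
     * theta (c * s * s^j) p * theta (a * t / (b * c) * t^j) p"
  define D where "D = theta (q * q^j) p * theta (a * s * t / (b * q) * (s * t / q)^j) p
     * theta (a * r * t / (c * q) * (r * t / q)^j) p * theta (b * c * r * s / q * (r * s / q)^j) p"
  define Tm where "Tm = theta (a * (r * s * t / q) ^ Suc j) p * theta (b * r ^ Suc j / q ^ Suc j) p
     * theta (c * s ^ Suc j / q ^ Suc j) p * theta (a * t ^ Suc j / (b * c * q ^ Suc j)) p"
  have PnS: "Psi_num a b c q r s t p (Suc j) = Pn * N"
    unfolding Pn_def N_def Psi_num_def ellpoch_Suc by (simp add: mult_ac)
  have PdS: "Psi_den a b c q r s t p (Suc j) = Pd * D"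
    unfolding Pd_def D_def Psi_den_def ellpoch_Suc by (simp add: mult_ac)
  have e1: "a * (r * s * t / q^2) = a * r * s * t / q^2" by simp
  have e2: "a / (b * c) * t = a * t / (b * c)" by simp
  have muN: "mu_num a b c q r s t p (Suc j) = Tm * Th4 * Pn"
    unfolding mu_num_def Tm_def Th4_def Pn_def Psi_num_def ellpoch_Suc_left e1 e2 by (simp add: mult_ac)
  have muD: "mu_den a b c q r s t p (Suc j) = Th4 * (Pd * D)"
    unfolding mu_den_eq PdS Th4_def by simp
  have nzs: "Th4 \<noteq> 0" "Pd \<noteq> 0" "D \<noteq> 0" using d unfolding muD by auto
  define u where "u = a * (r * s * t) ^ Suc j"
  define B where "B = b * r ^ Suc j"
  define C where "C = c * s ^ Suc j"
  define Q where "Q = q ^ Suc j"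
  have nz2: "u \<noteq> 0" "B \<noteq> 0" "C \<noteq> 0" "Q \<noteq> 0" using nz by (auto simp: u_def B_def C_def Q_def)
  have qq: "(q^2)^j = q^j * q^j" by (simp add: power_mult[symmetric] mult_2 power_add)
  have f1: "u / Q^2 = a * r * s * t / q^2 * (r * s * t / q^2)^j"
    using nz unfolding u_def Q_def by (simp add: field_simps power_mult_distrib power_divide qq power2_eq_square)
  have f2: "B = b * r * r^j" unfolding B_def by simp
  have f3: "C = c * s * s^j" unfolding C_def by simp
  have f4: "u / (B * C) = a * t / (b * c) * t^j"
    using nz unfolding u_def B_def C_def by (simp add: field_simps power_mult_distrib)
  have f5: "Q = q * q^j" unfolding Q_def by simp
  have f6: "u / (B * Q) = a * s * t / (b * q) * (s * t / q)^j"
    using nz unfolding u_def B_def Q_def by (simp add: field_simps power_mult_distrib power_divide)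
  have f7: "u / (C * Q) = a * r * t / (c * q) * (r * t / q)^j"
    using nz unfolding u_def C_def Q_def by (simp add: field_simps power_mult_distrib power_divide)
  have f8: "B * C / Q = b * c * r * s / q * (r * s / q)^j"
    using nz unfolding B_def C_def Q_def by (simp add: field_simps power_mult_distrib power_divide)
  have f9: "u / Q = a * (r * s * t / q) ^ Suc j"
    using nz unfolding u_def Q_def by (simp add: power_divide)
  have f10: "B / Q = b * r ^ Suc j / q ^ Suc j" unfolding B_def Q_def by simp
  have f11: "C / Q = c * s ^ Suc j / q ^ Suc j" unfolding C_def Q_def by simp
  have f12: "u / (B * C * Q) = a * t ^ Suc j / (b * c * q ^ Suc j)"
    using nz unfolding u_def B_def C_def Q_def by (simp add: field_simps power_mult_distrib)
  have ND: "N - D = Q * Tm"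
  proof -
    note ts = theta_step[OF p nz2]
    note ts2 = ts[unfolded f1 f4 f6 f7 f8 f9 f10 f11 f12]
    note ts3 = ts2[unfolded f2 f3 f5]
    show ?thesis unfolding N_def D_def Tm_def f5 using ts3 by (simp add: mult_ac)
  qed
  have "Psi a b c q r s t p (Suc j) - Psi a b c q r s t p j = Pn * N / (Pd * D) - Pn / Pd"
    unfolding Psi_def PnS PdS Pn_def Pd_def by simp
  also have "\<dots> = Pn * (N - D) / (Pd * D)" using nzs by (simp add: field_simps)
  also have "\<dots> = Tm * Th4 * Pn / (Th4 * (Pd * D)) * Q" unfolding ND using nzs by (simp add: field_simps)
  also have "\<dots> = mu a b c q r s t p (Suc j) * q ^ Suc j" unfolding mu_def muN muD Q_def by simp
  finally show ?thesis by (simp add: algebra_simps)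
qed

lemma psi_sum:
  fixes a b c q r s t p :: complex
  assumes p: "norm p < 1" and nz: "a \<noteq> 0" "b \<noteq> 0" "c \<noteq> 0" "q \<noteq> 0" "r \<noteq> 0" "s \<noteq> 0" "t \<noteq> 0"
    and d: "\<And>k. k \<le> n \<Longrightarrow> mu_den a b c q r s t p k \<noteq> 0"
  shows "m \<le> n \<Longrightarrow> (\<Sum>k=0..m. mu a b c q r s t p k * q ^ k) = Psi a b c q r s t p m"
proof (induction m)
  case 0 then show ?case using mu_0[OF d[of 0]] Psi_0 by simp
next
  case (Suc m)
  then show ?case using psi_step[OF p nz d[OF Suc.prems]] by simp
qed

lemma tri_swap:
  fixes f :: "nat \<Rightarrow> nat \<Rightarrow> complex"
  shows "(\<Sum>k=0..n. \<Sum>j=0..n-k. f k j) = (\<Sum>k=0..n. \<Sum>j=0..n-k. f j k)"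
proof -
  define S where "S = Sigma {0..n} (\<lambda>k. {0..n-k})"
  have S: "S = {(k, j). k + j \<le> n}" unfolding S_def by auto
  have fin: "finite S" unfolding S_def by auto
  have 1: "(\<Sum>k=0..n. \<Sum>j=0..n-k. g k j) = (\<Sum>(k,j)\<in>S. g k j)" for g :: "nat \<Rightarrow> nat \<Rightarrow> complex"
    unfolding S_def by (rule sum.Sigma) auto
  have 2: "(\<Sum>(k,j)\<in>S. f k j) = (\<Sum>(k,j)\<in>S. f j k)"
    by (rule sum.reindex_bij_witness[where i = prod.swap and j = prod.swap]) (auto simp: S)
  show ?thesis unfolding 1 2 ..
qed

theorem mainTheorem13:
  fixes a b c q r s t p A B C Q R S T P :: complex and n :: nat
  assumes "norm p < 1" and "norm P < 1"
    and "a \<noteq> 0" "b \<noteq> 0" "c \<noteq> 0" "q \<noteq> 0" "r \<noteq> 0" "s \<noteq> 0" "t \<noteq> 0"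
    and "A \<noteq> 0" "B \<noteq> 0" "C \<noteq> 0" "Q \<noteq> 0" "R \<noteq> 0" "S \<noteq> 0" "T \<noteq> 0"
    and "well_defined a b c q r s t p n"
    and "well_defined A B C Q R S T P n"
    and "Psi_num A B C Q R S T P n \<noteq> 0"
  shows "(\<Sum>k=0..n. mu a b c q r s t p k * rho A B C Q R S T P n k * q ^ k)
       = Psi a b c q r s t p n / Psi A B C Q R S T P n
         * (\<Sum>k=0..n. mu A B C Q R S T P k * rho a b c q r s t p n k * Q ^ k)"
proof -
  note p1 = assms(1) and p2 = assms(2)
  note nz1 = assms(3-9) and nz2 = assms(10-16)
  have mu1: "\<And>k. k \<le> n \<Longrightarrow> mu_den a b c q r s t p k \<noteq> 0"
    and rd1: "\<And>k. k \<le> n \<Longrightarrow> rho_den a b c q r s t p n k \<noteq> 0"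
    and pd1: "Psi_den a b c q r s t p n \<noteq> 0"
    using assms(17) unfolding well_defined_def by auto
  have mu2: "\<And>k. k \<le> n \<Longrightarrow> mu_den A B C Q R S T P k \<noteq> 0"
    and rd2: "\<And>k. k \<le> n \<Longrightarrow> rho_den A B C Q R S T P n k \<noteq> 0"
    and pd2: "Psi_den A B C Q R S T P n \<noteq> 0"
    using assms(18) unfolding well_defined_def by auto
  define SP where "SP = (\<lambda>k. mu a b c q r s t p k * q ^ k)"
  define SQ where "SQ = (\<lambda>k. mu A B C Q R S T P k * Q ^ k)"
  define P1 where "P1 = Psi a b c q r s t p"
  define P2 where "P2 = Psi A B C Q R S T P"
  have sum1: "m \<le> n \<Longrightarrow> (\<Sum>j=0..m. SP j) = P1 m" for m
    unfolding SP_def P1_def by (rule psi_sum[OF p1 nz1 mu1])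
  have sum2: "m \<le> n \<Longrightarrow> (\<Sum>j=0..m. SQ j) = P2 m" for m
    unfolding SQ_def P2_def by (rule psi_sum[OF p2 nz2 mu2])
  have P1n: "P1 n \<noteq> 0"
    using psi_num_nz[OF p1 nz1 pd1 rd1[OF order_refl]] pd1 by (simp add: P1_def Psi_def)
  have P2n: "P2 n \<noteq> 0"
    using psi_num_nz[OF p2 nz2 pd2 rd2[OF order_refl]] pd2 by (simp add: P2_def Psi_def)
  have rho1: "rho a b c q r s t p n k = P1 (n-k) / P1 n" if "k \<le> n" for k
    using psi_rho[OF p1 nz1 that pd1 rd1[OF that]] P1n by (simp add: P1_def field_simps)
  have rho2: "rho A B C Q R S T P n k = P2 (n-k) / P2 n" if "k \<le> n" for k
    using psi_rho[OF p2 nz2 that pd2 rd2[OF that]] P2n by (simp add: P2_def field_simps)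
  have L: "(\<Sum>k=0..n. mu a b c q r s t p k * rho A B C Q R S T P n k * q ^ k)
      = (\<Sum>k=0..n. \<Sum>j=0..n-k. SP k * SQ j) / P2 n"
  proof -
    have "(\<Sum>k=0..n. mu a b c q r s t p k * rho A B C Q R S T P n k * q ^ k)
        = (\<Sum>k=0..n. SP k * P2 (n-k) / P2 n)"
      by (rule sum.cong) (auto simp: rho2 SP_def)
    also have "\<dots> = (\<Sum>k=0..n. \<Sum>j=0..n-k. SP k * SQ j / P2 n)"
    proof (rule sum.cong)
      fix k assume "k \<in> {0..n}"
      then have "P2 (n-k) = (\<Sum>j=0..n-k. SQ j)" using sum2[of "n-k"] by simp
      then show "SP k * P2 (n-k) / P2 n = (\<Sum>j=0..n-k. SP k * SQ j / P2 n)"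
        by (simp add: sum_distrib_left sum_divide_distrib)
    qed simp
    also have "\<dots> = (\<Sum>k=0..n. \<Sum>j=0..n-k. SP k * SQ j) / P2 n"
      by (simp add: sum_divide_distrib)
    finally show ?thesis .
  qed
  have R: "(\<Sum>k=0..n. mu A B C Q R S T P k * rho a b c q r s t p n k * Q ^ k)
      = (\<Sum>k=0..n. \<Sum>j=0..n-k. SQ k * SP j) / P1 n"
  proof -
    have "(\<Sum>k=0..n. mu A B C Q R S T P k * rho a b c q r s t p n k * Q ^ k)
        = (\<Sum>k=0..n. SQ k * P1 (n-k) / P1 n)"
      by (rule sum.cong) (auto simp: rho1 SQ_def)
    also have "\<dots> = (\<Sum>k=0..n. \<Sum>j=0..n-k. SQ k * SP j / P1 n)"
    proof (rule sum.cong)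
      fix k assume "k \<in> {0..n}"
      then have "P1 (n-k) = (\<Sum>j=0..n-k. SP j)" using sum1[of "n-k"] by simp
      then show "SQ k * P1 (n-k) / P1 n = (\<Sum>j=0..n-k. SQ k * SP j / P1 n)"
        by (simp add: sum_distrib_left sum_divide_distrib)
    qed simp
    also have "\<dots> = (\<Sum>k=0..n. \<Sum>j=0..n-k. SQ k * SP j) / P1 n"
      by (simp add: sum_divide_distrib)
    finally show ?thesis .
  qed
  have X: "(\<Sum>k=0..n. \<Sum>j=0..n-k. SP k * SQ j) = (\<Sum>k=0..n. \<Sum>j=0..n-k. SQ k * SP j)"
    using tri_swap[of "\<lambda>k j. SP k * SQ j" n] by (simp add: mult.commute)
  show ?thesis unfolding L R X P1_def[symmetric] P2_def[symmetric] using P1n by simp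
qed

end
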